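(* Let $G$ be a non-amenable group and let $H$ be an amenable normal subgroup of $G$. Then $\mathcal{T}(G/H)=\mathcal{T}(G)$.
   Context: A group $G$ admits a paradoxical decomposition if there exist positive integers $m,n$, pairwise disjoint subsets $P_1,\ldots,P_m,Q_1,\ldots,Q_n$ of $G$ and elements $g_1,\ldots,g_m,h_1,\ldots,h_n\in G$ such that $G=\bigcup_{i=1}^m P_ig_i=\bigcup_{j=1}^n Q_jh_j$; this happens if and only if $G$ is non-amenable. For a non-amenable group $G$, the Tarski number $\mathcal{T}(G)$ is the minimal value of $m+n$ over all paradoxical decompositions of $G$. *)

theory Defs
  imports "HOL-Algebra.Algebra"
begin

definition paradoxical_decomposition :: "('a, 'b) monoid_scheme \<Rightarrow> nat \<Rightarrow> nat \<Rightarrow> bool" where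
  "paradoxical_decomposition G m n \<longleftrightarrow> 0 < m \<and> 0 < n \<and>
    (\<exists>(P :: nat \<Rightarrow> 'a set) (Q :: nat \<Rightarrow> 'a set) (g :: nat \<Rightarrow> 'a) (h :: nat \<Rightarrow> 'a).
       (\<forall>i<m. P i \<subseteq> carrier G \<and> g i \<in> carrier G) \<and>
       (\<forall>j<n. Q j \<subseteq> carrier G \<and> h j \<in> carrier G) \<and>
       (\<forall>i<m. \<forall>i'<m. i \<noteq> i' \<longrightarrow> P i \<inter> P i' = {}) \<and>
       (\<forall>j<n. \<forall>j'<n. j \<noteq> j' \<longrightarrow> Q j \<inter> Q j' = {}) \<and>
       (\<forall>i<m. \<forall>j<n. P i \<inter> Q j = {}) \<and>
       carrier G = (\<Union>i<m. P i #>\<^bsub>G\<^esub> g i) \<and>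
       carrier G = (\<Union>j<n. Q j #>\<^bsub>G\<^esub> h j))"

definition amenable :: "('a, 'b) monoid_scheme \<Rightarrow> bool" where
  "amenable G \<longleftrightarrow> (\<exists>\<mu> :: 'a set \<Rightarrow> real.
      (\<forall>A. A \<subseteq> carrier G \<longrightarrow> 0 \<le> \<mu> A) \<and>
      \<mu> (carrier G) = 1 \<and>
      (\<forall>A B. A \<subseteq> carrier G \<longrightarrow> B \<subseteq> carrier G \<longrightarrow> A \<inter> B = {} \<longrightarrow>
              \<mu> (A \<union> B) = \<mu> A + \<mu> B) \<and>
      (\<forall>g\<in>carrier G. \<forall>A. A \<subseteq> carrier G \<longrightarrow> \<mu> (A #>\<^bsub>G\<^esub> g) = \<mu> A))"

definition tarski_number :: "('a, 'b) monoid_scheme \<Rightarrow> nat" where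
  "tarski_number G = (LEAST k. \<exists>m n. m + n = k \<and> paradoxical_decomposition G m n)"

end

theory Submission
  imports Defs "HOL-Analysis.Function_Topology"
begin


lemma hall_fin_aux:
  fixes N :: "'l \<Rightarrow> 'r set"
  assumes "card L = k" "finite L" "\<forall>a\<in>L. finite (N a)"
    "\<forall>A\<subseteq>L. card A \<le> card (\<Union>(N ` A))"
  shows "\<exists>f. (\<forall>a\<in>L. f a \<in> N a) \<and> inj_on f L"
  using assms
proof (induction k arbitrary: L N rule: less_induct)
  case (less k L N)
  note fin = less.prems(2) and finN = less.prems(3) and hall = less.prems(4)
  show ?case
  proof (cases "L = {}")
    case True then show ?thesis by auto
  next
    case Lne: False
    show ?thesis
    proof (cases "\<exists>A. A \<subseteq> L \<and> A \<noteq> {} \<and> A \<noteq> L \<and> card (\<Union>(N ` A)) \<le> card A")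
      case True
      then obtain A where A: "A \<subseteq> L" "A \<noteq> {}" "A \<noteq> L" "card (\<Union>(N ` A)) \<le> card A" by blast
      have finA: "finite A" using A(1) fin finite_subset by blast
      have cardA: "card A < k" using A(1,3) fin less.prems(1) by (metis psubsetI psubset_card_mono)
      have h1: "\<forall>a\<in>A. finite (N a)" using finN A(1) by blast
      have h2: "\<forall>B\<subseteq>A. card B \<le> card (\<Union>(N ` B))"
      proof (intro allI impI)
        fix B assume "B \<subseteq> A"
        then have "B \<subseteq> L" using A(1) by (rule subset_trans)
        then show "card B \<le> card (\<Union>(N ` B))" using hall by simp
      qed
      obtain f1 where f1: "\<forall>a\<in>A. f1 a \<in> N a" "inj_on f1 A"
        using less.IH[OF cardA refl finA h1 h2] by blast
      define XX where "XX = \<Union>(N ` A)"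
      have finX: "finite XX" unfolding XX_def using finA finN A(1) by blast
      have cardX: "card XX = card A" using A(4) hall A(1) unfolding XX_def by (simp add: le_antisym)
      define N' where "N' = (\<lambda>a. N a - XX)"
      have cardLA: "card (L - A) < k" using A(1,2) fin less.prems(1)
      proof -
        have c0: "0 < card A" using finA A(2) by (simp add: card_gt_0_iff)
        have "card A \<le> k" using card_mono[OF fin A(1)] less.prems(1) by simp
        then show ?thesis using card_Diff_subset[OF finA A(1)] less.prems(1) c0 by simp
      qed
      have hall2: "\<forall>B\<subseteq>L - A. card B \<le> card (\<Union>(N' ` B))"
      proof (intro allI impI)
        fix B assume B: "B \<subseteq> L - A"
        have finB: "finite B" using B fin finite_subset by blast
        have AB: "A \<union> B \<subseteq> L" using A(1) B by blast
        have eq: "\<Union>(N' ` B) = \<Union>(N ` (A \<union> B)) - XX" unfolding N'_def XX_def by blast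
        have finU: "finite (\<Union>(N ` (A \<union> B)))" using AB finN finA finB by auto
        have sub: "XX \<subseteq> \<Union>(N ` (A \<union> B))" unfolding XX_def by blast
        have "card (\<Union>(N' ` B)) = card (\<Union>(N ` (A \<union> B))) - card XX"
          using eq card_Diff_subset[OF finX sub] by simp
        moreover have "card (A \<union> B) \<le> card (\<Union>(N ` (A \<union> B)))" using hall AB by blast
        moreover have "card (A \<union> B) = card A + card B" using B finA finB by (subst card_Un_disjoint) auto
        ultimately show "card B \<le> card (\<Union>(N' ` B))" using cardX by linarith
      qed
      obtain f2 where f2: "\<forall>a\<in>L - A. f2 a \<in> N' a" "inj_on f2 (L - A)"
      proof -
        have "finite (L - A)" using fin by blast
        moreover have "\<forall>a\<in>L - A. finite (N' a)" using finN unfolding N'_def by blast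
        ultimately show ?thesis using less.IH[OF cardLA refl _ _ hall2] that by blast
      qed
      define f where "f = (\<lambda>a. if a \<in> A then f1 a else f2 a)"
      have "\<forall>a\<in>L. f a \<in> N a" using f1 f2 unfolding f_def N'_def by auto
      moreover have "inj_on f L"
      proof (rule inj_onI)
        fix x y assume xy: "x \<in> L" "y \<in> L" "f x = f y"
        have XA: "\<And>a. a \<in> A \<Longrightarrow> f1 a \<in> XX" using f1 unfolding XX_def by blast
        have XB: "\<And>a. a \<in> L - A \<Longrightarrow> f2 a \<notin> XX" using f2 unfolding N'_def by blast
        show "x = y"
        proof (cases "x \<in> A"; cases "y \<in> A")
          assume "x \<in> A" "y \<in> A" then show ?thesis using xy f1(2) unfolding f_def by (auto dest: inj_onD)
        next
          assume "x \<in> A" "y \<notin> A" then show ?thesis using xy XA XB unfolding f_def by fastforce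
        next
          assume "x \<notin> A" "y \<in> A" then show ?thesis using xy XA XB unfolding f_def by fastforce
        next
          assume "x \<notin> A" "y \<notin> A" then show ?thesis using xy f2(2) unfolding f_def by (auto dest: inj_onD)
        qed
      qed
      ultimately show ?thesis by blast
    next
      case False
      hence strict: "\<And>A. A \<subseteq> L \<Longrightarrow> A \<noteq> {} \<Longrightarrow> A \<noteq> L \<Longrightarrow> card A < card (\<Union>(N ` A))"
        by (meson not_le)
      obtain a where a: "a \<in> L" using Lne by blast
      have "card {a} \<le> card (\<Union>(N ` {a}))" using hall a by blast
      hence "N a \<noteq> {}" by auto
      then obtain y where y: "y \<in> N a" by blast
      define N' where "N' = (\<lambda>x. N x - {y})"
      have cardL': "card (L - {a}) < k" using a fin less.prems(1) card_Diff1_less by metis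
      have hall2: "\<forall>B\<subseteq>L - {a}. card B \<le> card (\<Union>(N' ` B))"
      proof (intro allI impI)
        fix B assume B: "B \<subseteq> L - {a}"
        show "card B \<le> card (\<Union>(N' ` B))"
        proof (cases "B = {}")
          case True then show ?thesis by simp
        next
          case False
          have BL: "B \<subseteq> L" "B \<noteq> L" using B a by auto
          have finB: "finite B" using BL fin finite_subset by blast
          have lt: "card B < card (\<Union>(N ` B))" using strict[OF BL(1) False BL(2)] .
          have eq: "\<Union>(N' ` B) = \<Union>(N ` B) - {y}" unfolding N'_def by blast
          have finU: "finite (\<Union>(N ` B))" using finB finN BL by auto
          have c1: "card (\<Union>(N ` B)) - 1 \<le> card (\<Union>(N ` B) - {y})"
            by (metis card_Diff1_le card_Diff_singleton_if diff_le_self le_refl finU)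
          show ?thesis unfolding eq using c1 lt by linarith
        qed
      qed
      obtain f2 where f2: "\<forall>x\<in>L - {a}. f2 x \<in> N' x" "inj_on f2 (L - {a})"
      proof -
        have "finite (L - {a})" using fin by blast
        moreover have "\<forall>x\<in>L - {a}. finite (N' x)" using finN unfolding N'_def by blast
        ultimately show ?thesis using less.IH[OF cardL' refl _ _ hall2] that by blast
      qed
      define f where "f = f2(a := y)"
      have "\<forall>x\<in>L. f x \<in> N x" using f2 y unfolding f_def N'_def by auto
      moreover have "inj_on f L"
      proof (rule inj_onI)
        fix u v assume uv: "u \<in> L" "v \<in> L" "f u = f v"
        have ny: "\<And>x. x \<in> L - {a} \<Longrightarrow> f2 x \<noteq> y" using f2(1) unfolding N'_def by blast
        show "u = v"
        proof (cases "u = a"; cases "v = a")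
          assume "u \<noteq> a" "v \<noteq> a" then show ?thesis using uv f2(2) unfolding f_def by (auto dest: inj_onD)
        next
          assume "u = a" "v \<noteq> a" then show ?thesis using uv ny unfolding f_def by fastforce
        next
          assume "u \<noteq> a" "v = a" then show ?thesis using uv ny unfolding f_def by fastforce
        qed simp
      qed
      ultimately show ?thesis by blast
    qed
  qed
qed

lemma hall_inf:
  fixes N :: "'l \<Rightarrow> 'r set"
  assumes finN: "\<forall>a\<in>L. finite (N a)"
    and hall: "\<forall>A\<subseteq>L. finite A \<longrightarrow> card A \<le> card (\<Union>(N ` A))"
  shows "\<exists>f. (\<forall>a\<in>L. f a \<in> N a) \<and> inj_on f L"
proof -
  define TT where "TT = product_topology (\<lambda>a. discrete_topology (N a)) L"
  have top: "topspace TT = (\<Pi>\<^sub>E a\<in>L. N a)" unfolding TT_def by simp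
  have cpt: "compact_space TT" unfolding TT_def
    using finN by (simp add: compact_space_product_topology compact_space_discrete_topology)
  have ne: "\<And>x. x \<in> L \<Longrightarrow> N x \<noteq> {}"
  proof -
    fix x assume "x \<in> L"
    then have "card {x} \<le> card (\<Union>(N ` {x}))" using hall by (metis empty_subsetI finite.emptyI finite_insert insert_subset)
    then show "N x \<noteq> {}" by auto
  qed
  define C where "C = (\<lambda>(a,b). {f \<in> topspace TT. f a \<noteq> f b})"
  define P where "P = {(a,b). a \<in> L \<and> b \<in> L \<and> a \<noteq> b}"
  define U where "U = insert (topspace TT) (C ` P)"
  have proj: "\<And>a. a \<in> L \<Longrightarrow> continuous_map TT (discrete_topology (N a)) (\<lambda>f. f a)"
    unfolding TT_def by (rule continuous_map_product_projection)
  have closedC: "closedin TT (C p)" if pP: "p \<in> P" for p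
  proof -
    obtain a b where p: "p = (a,b)" "a \<in> L" "b \<in> L" using pP unfolding P_def by (cases p) auto
    have eq: "C p = (\<Union>u\<in>N a. {f \<in> topspace TT. f a \<in> {u}} \<inter> {f \<in> topspace TT. f b \<in> N b - {u}})"
      unfolding p C_def using top p by (auto simp: PiE_iff)
    have c1: "closedin TT {f \<in> topspace TT. f a \<in> {u}}" if "u \<in> N a" for u
      by (rule closedin_continuous_map_preimage[OF proj[OF p(2)]]) (simp add: that)
    have c2: "closedin TT {f \<in> topspace TT. f b \<in> N b - {u}}" for u
      by (rule closedin_continuous_map_preimage[OF proj[OF p(3)]]) auto
    show ?thesis unfolding eq
      apply (rule closedin_Union)
      using finN p apply simp
      using c1 c2 by blast
  qed
  have "\<Inter>U \<noteq> {}"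
  proof (rule compact_space_fip[THEN iffD1, OF cpt, rule_format], intro conjI allI impI)
    show "\<forall>c\<in>U. closedin TT c" unfolding U_def using closedC by auto
  next
    fix F assume F: "finite F \<and> F \<subseteq> U"
    have "F - {topspace TT} \<subseteq> C ` P" using F unfolding U_def by blast
    moreover have "finite (F - {topspace TT})" using F by blast
    ultimately obtain P0 where P0: "P0 \<subseteq> P" "finite P0" "F - {topspace TT} = C ` P0"
      using finite_subset_image by metis
    define A where "A = fst ` P0 \<union> snd ` P0"
    have A: "finite A" "A \<subseteq> L" using P0 unfolding A_def P_def by auto
    have h1: "\<forall>a\<in>A. finite (N a)" using finN A by blast
    have h2: "\<forall>B\<subseteq>A. card B \<le> card (\<Union>(N ` B))"
    proof (intro allI impI)
      fix B assume "B \<subseteq> A"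
      then have "B \<subseteq> L" "finite B" using A by (auto intro: finite_subset)
      then show "card B \<le> card (\<Union>(N ` B))" using hall by simp
    qed
    obtain g where g: "\<forall>a\<in>A. g a \<in> N a" "inj_on g A"
      using hall_fin_aux[OF refl A(1) h1 h2] by blast
    define f where "f = (\<lambda>x. if x \<in> A then g x else if x \<in> L then (SOME y. y \<in> N x) else undefined)"
    have ftop: "f \<in> topspace TT" unfolding top f_def using g A ne
      by (auto simp: PiE_iff extensional_def some_in_eq)
    have "f \<in> \<Inter>F"
    proof
      fix c assume "c \<in> F"
      show "f \<in> c"
      proof (cases "c = topspace TT")
        case True then show ?thesis using ftop by simp
      next
        case False
        then have "c \<in> C ` P0" using P0(3) \<open>c \<in> F\<close> by blast
        then obtain a b where ab: "(a,b) \<in> P0" "c = C (a,b)" by auto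
        have "a \<in> A" "b \<in> A" "a \<noteq> b" using ab P0(1) unfolding A_def P_def by (force+)
        then have "f a \<noteq> f b" using g(2) unfolding f_def by (auto dest: inj_onD)
        then show ?thesis using ab ftop unfolding C_def by simp
      qed
    qed
    then show "\<Inter>F \<noteq> {}" by blast
  qed
  then obtain f where f: "f \<in> \<Inter>U" by blast
  have ftop: "f \<in> topspace TT" using f unfolding U_def by blast
  have "\<forall>a\<in>L. f a \<in> N a" using ftop top by (auto simp: PiE_iff)
  moreover have "inj_on f L"
  proof (rule inj_onI, rule ccontr)
    fix a b assume ab: "a \<in> L" "b \<in> L" "f a = f b" "a \<noteq> b"
    then have "C (a,b) \<in> U" unfolding U_def P_def by blast
    then have "f \<in> C (a,b)" using f by blast
    then show False using ab unfolding C_def by simp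
  qed
  ultimately show ?thesis by blast
qed



locale amen_normal = normal +
  fixes \<mu> :: "'a set \<Rightarrow> real"
  assumes mu_nonneg: "A \<subseteq> H \<Longrightarrow> 0 \<le> \<mu> A"
    and mu_one: "\<mu> H = 1"
    and mu_add: "A \<subseteq> H \<Longrightarrow> B \<subseteq> H \<Longrightarrow> A \<inter> B = {} \<Longrightarrow> \<mu> (A \<union> B) = \<mu> A + \<mu> B"
    and mu_inv: "h \<in> H \<Longrightarrow> A \<subseteq> H \<Longrightarrow> \<mu> (A #> h) = \<mu> A"
begin

lemma grp_id2: "b \<in> carrier G \<Longrightarrow> c \<in> carrier G \<Longrightarrow> inv b \<otimes> (b \<otimes> c) = c"
  by (simp add: m_assoc[symmetric])

lemma mu_empty: "\<mu> {} = 0"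
  using mu_add[of "{}" "{}"] by simp

definition rep :: "'a set \<Rightarrow> 'a" where "rep C = (SOME x. x \<in> C)"
definition nu :: "'a set \<Rightarrow> 'a set \<Rightarrow> real" where "nu C S = \<mu> (S #> inv (rep C))"

lemma rep_props:
  assumes "C \<in> rcosets H"
  shows "rep C \<in> C" "rep C \<in> carrier G" "C = H #> rep C"
proof -
  obtain c where c: "c \<in> carrier G" "C = H #> c" using assms unfolding RCOSETS_def by auto
  have "c \<in> C" using c rcos_self subgroup_axioms by blast
  then show r: "rep C \<in> C" unfolding rep_def by (rule someI)
  then show "rep C \<in> carrier G" using c elemrcos_carrier is_group by blast
  show "C = H #> rep C" using c r repr_independence subgroup_axioms by blast
qed

lemma coset_carrier: "C \<in> rcosets H \<Longrightarrow> C \<subseteq> carrier G"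
  using rcosets_carrier is_group by blast

lemma rcoset_image: "S #> t = (\<lambda>x. x \<otimes> t) ` S"
  unfolding r_coset_def by auto

lemma sub_H:
  assumes "C \<in> rcosets H" "S \<subseteq> C"
  shows "S #> inv (rep C) \<subseteq> H"
proof
  fix y assume "y \<in> S #> inv (rep C)"
  then obtain x where x: "x \<in> S" "y = x \<otimes> inv (rep C)" unfolding rcoset_image by auto
  have "x \<in> H #> rep C" using x assms rep_props by blast
  then show "y \<in> H" using x rcos_module_imp[OF is_group] rep_props[OF assms(1)] by simp
qed

lemma nu_one: "C \<in> rcosets H \<Longrightarrow> nu C C = 1"
proof -
  assume C: "C \<in> rcosets H"
  have rc: "rep C \<in> carrier G" using rep_props[OF C] by simp
  have "C #> inv (rep C) = (H #> rep C) #> inv (rep C)" using rep_props(3)[OF C] by simp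
  also have "\<dots> = H #> (rep C \<otimes> inv (rep C))"
    by (rule coset_mult_assoc[OF subset rc inv_closed[OF rc]])
  also have "\<dots> = H" using rep_props[OF C] by (simp add: coset_mult_one subset)
  finally show ?thesis unfolding nu_def using mu_one by simp
qed

lemma nu_empty: "nu C {} = 0"
  unfolding nu_def rcoset_image using mu_empty by simp

lemma nu_nonneg: "C \<in> rcosets H \<Longrightarrow> S \<subseteq> C \<Longrightarrow> 0 \<le> nu C S"
  unfolding nu_def by (rule mu_nonneg[OF sub_H])

lemma nu_add:
  assumes C: "C \<in> rcosets H" and S: "S \<subseteq> C" "S' \<subseteq> C" "S \<inter> S' = {}"
  shows "nu C (S \<union> S') = nu C S + nu C S'"
proof -
  let ?r = "inv (rep C)"
  have r: "?r \<in> carrier G" using rep_props[OF C] by simp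
  have Cc: "C \<subseteq> carrier G" using coset_carrier[OF C] .
  have "(S \<union> S') #> ?r = (S #> ?r) \<union> (S' #> ?r)" unfolding rcoset_image by auto
  moreover have "(S #> ?r) \<inter> (S' #> ?r) = {}"
  proof -
    have "x = y" if "x \<in> S" "y \<in> S'" "x \<otimes> ?r = y \<otimes> ?r" for x y
      using that S Cc r by (meson r_cancel subsetD)
    then show ?thesis using S(3) unfolding rcoset_image by auto
  qed
  moreover have "S #> ?r \<subseteq> H" "S' #> ?r \<subseteq> H" using sub_H[OF C] S by auto
  ultimately show ?thesis unfolding nu_def using mu_add by presburger
qed

lemma nu_trans:
  assumes C: "C \<in> rcosets H" and D: "D \<in> rcosets H" and S: "S \<subseteq> C"
    and t: "t \<in> carrier G" and SD: "S #> t \<subseteq> D"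
  shows "nu D (S #> t) = nu C S"
proof (cases "S = {}")
  case True then show ?thesis by (simp add: nu_def rcoset_image)
next
  case False
  then obtain s where s: "s \<in> S" by blast
  define rC where "rC = rep C"
  define rD where "rD = rep D"
  have rC: "rC \<in> carrier G" "C = H #> rC" using rep_props[OF C] unfolding rC_def by auto
  have rD: "rD \<in> carrier G" "D = H #> rD" using rep_props[OF D] unfolding rD_def by auto
  have Sc: "S \<subseteq> carrier G" using S coset_carrier[OF C] by blast
  have sc: "s \<in> carrier G" using s Sc by blast
  have "s \<otimes> t \<in> D" using SD s unfolding rcoset_image by blast
  then have a: "s \<otimes> t \<otimes> inv rD \<in> H" using rcos_module_imp[OF is_group] rD by simp
  have b: "s \<otimes> inv rC \<in> H" using rcos_module_imp[OF is_group] rC s S by blast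
  define k where "k = rC \<otimes> (t \<otimes> inv rD)"
  have kc: "k \<in> carrier G" unfolding k_def using rC rD t by simp
  have e1: "inv (s \<otimes> inv rC) = rC \<otimes> inv s" using rC sc by (simp add: inv_mult_group)
  have e2: "s \<otimes> t \<otimes> inv rD = s \<otimes> (t \<otimes> inv rD)" using sc t rD by (simp add: m_assoc)
  have "k = inv (s \<otimes> inv rC) \<otimes> (s \<otimes> t \<otimes> inv rD)"
    unfolding e1 e2 k_def using rC rD t sc by (simp add: m_assoc grp_id2)
  then have kH: "k \<in> H" using a b by (simp add: m_closed m_inv_closed)
  have "(S #> t) #> inv rD = S #> (t \<otimes> inv rD)" using coset_mult_assoc Sc t rD by simp
  also have "\<dots> = S #> (inv rC \<otimes> k)"
    unfolding k_def using rC rD t by (simp add: grp_id2)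
  also have "\<dots> = (S #> inv rC) #> k" using coset_mult_assoc Sc rC kc by simp
  finally have eq: "(S #> t) #> inv rD = (S #> inv rC) #> k" .
  show ?thesis unfolding nu_def rC_def[symmetric] rD_def[symmetric] eq
    using mu_inv[OF kH] sub_H[OF C S] unfolding rC_def by simp
qed

definition mass :: "'a set set \<Rightarrow> 'a set \<Rightarrow> real" where
  "mass R S = (\<Sum>D\<in>R. nu D (S \<inter> D))"

lemma mass_add:
  assumes R: "R \<subseteq> rcosets H" and d: "S \<inter> S' = {}"
  shows "mass R (S \<union> S') = mass R S + mass R S'"
proof -
  have "nu D ((S \<union> S') \<inter> D) = nu D (S \<inter> D) + nu D (S' \<inter> D)" if "D \<in> R" for D
  proof -
    have "(S \<union> S') \<inter> D = (S \<inter> D) \<union> (S' \<inter> D)" by blast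
    then show ?thesis using nu_add[of D "S \<inter> D" "S' \<inter> D"] that R d by auto
  qed
  then show ?thesis unfolding mass_def by (simp add: sum.distrib)
qed

lemma mass_nonneg: "R \<subseteq> rcosets H \<Longrightarrow> 0 \<le> mass R S"
  unfolding mass_def by (intro sum_nonneg) (auto intro: nu_nonneg)

lemma mass_mono:
  assumes R: "R \<subseteq> rcosets H" and "S \<subseteq> S'"
  shows "mass R S \<le> mass R S'"
proof -
  have "S' = S \<union> (S' - S)" using assms by blast
  then have "mass R S' = mass R S + mass R (S' - S)" using mass_add[OF R, of S "S' - S"] by auto
  then show ?thesis using mass_nonneg[OF R, of "S' - S"] by simp
qed

lemma mass_empty: "mass R {} = 0"
  unfolding mass_def by (simp add: nu_empty)

lemma mass_single:
  assumes R: "R \<subseteq> rcosets H" "finite R" and D0: "D0 \<in> R" and S: "S \<subseteq> D0"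
  shows "mass R S = nu D0 S"
proof -
  have z: "nu D (S \<inter> D) = 0" if "D \<in> R - {D0}" for D
  proof -
    have "D \<inter> D0 = {}" using rcos_disjoint[OF subgroup_axioms] that R D0
      unfolding pairwise_def disjnt_def by blast
    then have "S \<inter> D = {}" using S by blast
    then show ?thesis by (simp add: nu_empty)
  qed
  have "mass R S = nu D0 (S \<inter> D0) + (\<Sum>D\<in>R - {D0}. nu D (S \<inter> D))"
    unfolding mass_def using R D0 by (simp add: sum.remove)
  also have "\<dots> = nu D0 S" using z S by (simp add: Int_absorb2)
  finally show ?thesis .
qed

lemma mass_all:
  assumes R: "R \<subseteq> rcosets H" "finite R"
  shows "mass R (\<Union>R) = real (card R)"
proof -
  have "nu D (\<Union>R \<inter> D) = 1" if "D \<in> R" for D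
  proof -
    have "\<Union>R \<inter> D = D" using that by blast
    then show ?thesis using nu_one that R by auto
  qed
  then show ?thesis unfolding mass_def by simp
qed

lemma mass_UN:
  assumes R: "R \<subseteq> rcosets H" and I: "finite I"
    and d: "\<And>i j. i \<in> I \<Longrightarrow> j \<in> I \<Longrightarrow> i \<noteq> j \<Longrightarrow> E i \<inter> E j = {}"
  shows "mass R (\<Union>i\<in>I. E i) = (\<Sum>i\<in>I. mass R (E i))"
  using I d
proof (induction I rule: finite_induct)
  case empty then show ?case by (simp add: mass_empty)
next
  case (insert i I)
  have "E i \<inter> (\<Union>j\<in>I. E j) = {}" using insert by blast
  then show ?case using insert mass_add[OF R] by simp
qed

lemma key:
  assumes R: "R \<subseteq> rcosets H" "finite R" and C: "C \<in> rcosets H"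
    and T: "finite T" "T \<subseteq> carrier G" "\<forall>t\<in>T. C #> t \<in> R"
    and S: "S \<subseteq> C" and f: "\<forall>x\<in>S. \<exists>t\<in>T. f x = x \<otimes> t" and inj: "inj_on f S"
  shows "mass R (f ` S) = nu C S"
  using T(1) T(2) T(3) S f inj
proof (induction T arbitrary: S rule: finite_induct)
  case empty
  then have "S = {}" by auto
  then show ?case by (simp add: mass_empty nu_empty)
next
  case (insert t T S)
  note Tc = insert.prems(1) and TR = insert.prems(2) and SC = insert.prems(3)
    and fS = insert.prems(4) and injS = insert.prems(5)
  define S1 where "S1 = {x \<in> S. f x = x \<otimes> t}"
  define S2 where "S2 = S - S1"
  have tc: "t \<in> carrier G" using Tc by simp
  have S2f: "\<forall>x\<in>S2. \<exists>t\<in>T. f x = x \<otimes> t" using fS unfolding S2_def S1_def by auto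
  have S2C: "S2 \<subseteq> C" using SC unfolding S2_def by blast
  have injS2: "inj_on f S2" by (rule inj_on_subset[OF injS]) (simp add: S2_def)
  have Tc': "T \<subseteq> carrier G" using Tc by simp
  have TR': "\<forall>t\<in>T. C #> t \<in> R" using TR by simp
  have IH: "mass R (f ` S2) = nu C S2"
    by (rule insert.IH[OF Tc' TR' S2C S2f injS2])
  have im1: "f ` S1 = S1 #> t" unfolding rcoset_image S1_def by auto
  have CtR: "C #> t \<in> R" using TR by simp
  have S1C: "S1 \<subseteq> C" using SC unfolding S1_def by auto
  have sub: "S1 #> t \<subseteq> C #> t" using S1C unfolding rcoset_image by auto
  have CtH: "C #> t \<in> rcosets H" using CtR R by blast
  have m1: "mass R (f ` S1) = nu C S1"
    unfolding im1 mass_single[OF R CtR sub] by (rule nu_trans[OF C CtH S1C tc sub])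
  have Seq: "S = S1 \<union> S2" "S1 \<inter> S2 = {}" unfolding S2_def S1_def by auto
  have "f ` S1 \<inter> f ` S2 = {}" using injS Seq unfolding inj_on_def by blast
  then have "mass R (f ` S) = mass R (f ` S1) + mass R (f ` S2)"
    using mass_add[OF R(1)] Seq(1) by (metis image_Un)
  also have "\<dots> = nu C S1 + nu C S2" using m1 IH by simp
  also have "\<dots> = nu C S" using nu_add[OF C S1C S2C Seq(2)] Seq(1) by simp
  finally show ?case .
qed

lemma hall_count:
  fixes I :: "'i set" and Cs :: "'i \<Rightarrow> 'a set" and T :: "'i \<Rightarrow> 'a set"
    and f :: "'i \<Rightarrow> 'a \<Rightarrow> 'a"
  assumes I: "finite I" and Cs: "\<forall>a\<in>I. Cs a \<in> rcosets H"
    and T: "\<forall>a\<in>I. finite (T a) \<and> T a \<subseteq> carrier G"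
    and f: "\<forall>a\<in>I. \<forall>x\<in>Cs a. \<exists>t\<in>T a. f a x = x \<otimes> t"
    and inj: "inj_on (\<lambda>(a,x). f a x) (Sigma I Cs)"
  shows "card I \<le> card (\<Union>a\<in>I. (\<lambda>t. Cs a #> t) ` T a)"
proof -
  define R where "R = (\<Union>a\<in>I. (\<lambda>t. Cs a #> t) ` T a)"
  have finR: "finite R" unfolding R_def using I T by auto
  have Rc: "R \<subseteq> rcosets H"
  proof
    fix D assume "D \<in> R"
    then obtain a t where at: "a \<in> I" "t \<in> T a" "D = Cs a #> t" unfolding R_def by auto
    obtain c where c: "c \<in> carrier G" "Cs a = H #> c" using Cs at unfolding RCOSETS_def by auto
    have tc: "t \<in> carrier G" using T at by auto
    have "D = H #> (c \<otimes> t)" using at c tc coset_mult_assoc subset by simp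
    then show "D \<in> rcosets H" using c tc by (simp add: rcosetsI subset)
  qed
  define E where "E = (\<lambda>a. f a ` Cs a)"
  have injA: "inj_on (f a) (Cs a)" if "a \<in> I" for a
    using inj that unfolding inj_on_def by fastforce
  have mE: "mass R (E a) = 1" if a: "a \<in> I" for a
  proof -
    have t1: "finite (T a)" "T a \<subseteq> carrier G" using T a by auto
    have t2: "\<forall>t\<in>T a. Cs a #> t \<in> R" using a unfolding R_def by blast
    have t3: "\<forall>x\<in>Cs a. \<exists>t\<in>T a. f a x = x \<otimes> t" using f a by blast
    have "mass R (E a) = nu (Cs a) (Cs a)"
      unfolding E_def
      by (rule key[OF Rc finR _ t1 t2 order_refl t3 injA[OF a]]) (use Cs a in blast)
    then show ?thesis using nu_one Cs a by simp
  qed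
  have dE: "E a \<inter> E b = {}" if "a \<in> I" "b \<in> I" "a \<noteq> b" for a b
    using inj that unfolding E_def inj_on_def by fastforce
  have EsubR: "(\<Union>a\<in>I. E a) \<subseteq> \<Union>R"
  proof
    fix y assume "y \<in> (\<Union>a\<in>I. E a)"
    then obtain a x where ax: "a \<in> I" "x \<in> Cs a" "y = f a x" unfolding E_def by auto
    then obtain t where t: "t \<in> T a" "f a x = x \<otimes> t" using f by blast
    have "y \<in> Cs a #> t" using ax t unfolding rcoset_image by auto
    moreover have "Cs a #> t \<in> R" unfolding R_def using ax t by auto
    ultimately show "y \<in> \<Union>R" by blast
  qed
  have "real (card I) = (\<Sum>a\<in>I. mass R (E a))" using mE by simp
  also have "\<dots> = mass R (\<Union>a\<in>I. E a)" using mass_UN[OF Rc I dE] by simp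
  also have "\<dots> \<le> mass R (\<Union>R)" using mass_mono[OF Rc EsubR] .
  also have "\<dots> = real (card R)" using mass_all[OF Rc finR] .
  finally show ?thesis unfolding R_def by simp
qed

end



definition mt :: "('c, 'd) monoid_scheme \<Rightarrow> nat \<Rightarrow> nat \<Rightarrow> bool" where
  "mt K m n \<longleftrightarrow> 0 < m \<and> 0 < n \<and>
    (\<exists>(g :: nat \<Rightarrow> 'c) (h :: nat \<Rightarrow> 'c) (F :: bool \<Rightarrow> 'c \<Rightarrow> 'c).
      (\<forall>i<m. g i \<in> carrier K) \<and> (\<forall>j<n. h j \<in> carrier K) \<and>
      (\<forall>x\<in>carrier K. \<exists>i<m. F True x = x \<otimes>\<^bsub>K\<^esub> inv\<^bsub>K\<^esub> g i) \<and>
      (\<forall>x\<in>carrier K. \<exists>j<n. F False x = x \<otimes>\<^bsub>K\<^esub> inv\<^bsub>K\<^esub> h j) \<and>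
      inj_on (\<lambda>(b,x). F b x) (UNIV \<times> carrier K))"

context group begin

lemma pd_imp_mt:
  assumes "paradoxical_decomposition G m n"
  shows "mt G m n"
proof -
  obtain P Q g h where mn: "0 < m" "0 < n"
    and Pc: "\<forall>i<m. P i \<subseteq> carrier G \<and> g i \<in> carrier G"
    and Qc: "\<forall>j<n. Q j \<subseteq> carrier G \<and> h j \<in> carrier G"
    and dP: "\<forall>i<m. \<forall>i'<m. i \<noteq> i' \<longrightarrow> P i \<inter> P i' = {}"
    and dQ: "\<forall>j<n. \<forall>j'<n. j \<noteq> j' \<longrightarrow> Q j \<inter> Q j' = {}"
    and dPQ: "\<forall>i<m. \<forall>j<n. P i \<inter> Q j = {}"
    and cP: "carrier G = (\<Union>i<m. P i #> g i)"
    and cQ: "carrier G = (\<Union>j<n. Q j #> h j)"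
    using assms unfolding paradoxical_decomposition_def by (elim conjE exE) (rule that; assumption)
  have exP: "\<exists>i. i < m \<and> x \<otimes> inv g i \<in> P i" if x: "x \<in> carrier G" for x
  proof -
    obtain i p where ip: "i < m" "p \<in> P i" "x = p \<otimes> g i"
      using x cP unfolding r_coset_def by blast
    have pc: "p \<in> carrier G" "g i \<in> carrier G" using ip Pc by auto
    have "x \<otimes> inv g i = p" using ip pc by (simp add: m_assoc)
    then show ?thesis using ip by blast
  qed
  have exQ: "\<exists>j. j < n \<and> x \<otimes> inv h j \<in> Q j" if x: "x \<in> carrier G" for x
  proof -
    obtain j p where jp: "j < n" "p \<in> Q j" "x = p \<otimes> h j"
      using x cQ unfolding r_coset_def by blast
    have pc: "p \<in> carrier G" "h j \<in> carrier G" using jp Qc by auto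
    have "x \<otimes> inv h j = p" using jp pc by (simp add: m_assoc)
    then show ?thesis using jp by blast
  qed
  define I1 where "I1 x = (SOME i. i < m \<and> x \<otimes> inv g i \<in> P i)" for x
  define I2 where "I2 x = (SOME j. j < n \<and> x \<otimes> inv h j \<in> Q j)" for x
  have I1: "I1 x < m \<and> x \<otimes> inv g (I1 x) \<in> P (I1 x)" if "x \<in> carrier G" for x
    unfolding I1_def using someI_ex[OF exP[OF that]] .
  have I2: "I2 x < n \<and> x \<otimes> inv h (I2 x) \<in> Q (I2 x)" if "x \<in> carrier G" for x
    unfolding I2_def using someI_ex[OF exQ[OF that]] .
  define F where "F b x = (if b then x \<otimes> inv g (I1 x) else x \<otimes> inv h (I2 x))" for b x
  have "inj_on (\<lambda>(b,x). F b x) (UNIV \<times> carrier G)"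
  proof (rule inj_onI, clarify)
    fix b x b' y assume x: "x \<in> carrier G" and y: "y \<in> carrier G" and eq: "F b x = F b' y"
    note Ix = I1[OF x] I2[OF x] and Iy = I1[OF y] I2[OF y]
    show "b = b' \<and> x = y"
    proof (cases b; cases b')
      assume "b" "b'"
      then have e: "x \<otimes> inv g (I1 x) = y \<otimes> inv g (I1 y)" using eq unfolding F_def by simp
      have eqI: "I1 x = I1 y"
      proof (rule ccontr)
        assume ne: "I1 x \<noteq> I1 y"
        have "P (I1 x) \<inter> P (I1 y) = {}"
          using dP[rule_format, OF conjunct1[OF Ix(1)] conjunct1[OF Iy(1)] ne] .
        moreover have "x \<otimes> inv g (I1 x) \<in> P (I1 x)" using Ix(1) by (rule conjunct2)
        moreover have "x \<otimes> inv g (I1 x) \<in> P (I1 y)" unfolding e using Iy(1) by (rule conjunct2)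
        ultimately show False by blast
      qed
      have gi: "g (I1 y) \<in> carrier G" using Pc[rule_format, OF conjunct1[OF Iy(1)]] by blast
      show ?thesis using e eqI x y gi \<open>b\<close> \<open>b'\<close> by simp
    next
      assume "b" "\<not> b'"
      then have e: "x \<otimes> inv g (I1 x) = y \<otimes> inv h (I2 y)" using eq unfolding F_def by simp
      have "P (I1 x) \<inter> Q (I2 y) = {}"
        using dPQ[rule_format, OF conjunct1[OF Ix(1)] conjunct1[OF Iy(2)]] .
      moreover have "x \<otimes> inv g (I1 x) \<in> P (I1 x)" using Ix(1) by (rule conjunct2)
      moreover have "x \<otimes> inv g (I1 x) \<in> Q (I2 y)" unfolding e using Iy(2) by (rule conjunct2)
      ultimately show ?thesis by blast
    next
      assume "\<not> b" "b'"
      then have e: "x \<otimes> inv h (I2 x) = y \<otimes> inv g (I1 y)" using eq unfolding F_def by simp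
      have "P (I1 y) \<inter> Q (I2 x) = {}"
        using dPQ[rule_format, OF conjunct1[OF Iy(1)] conjunct1[OF Ix(2)]] .
      moreover have "x \<otimes> inv h (I2 x) \<in> Q (I2 x)" using Ix(2) by (rule conjunct2)
      moreover have "x \<otimes> inv h (I2 x) \<in> P (I1 y)" unfolding e using Iy(1) by (rule conjunct2)
      ultimately show ?thesis by blast
    next
      assume "\<not> b" "\<not> b'"
      then have e: "x \<otimes> inv h (I2 x) = y \<otimes> inv h (I2 y)" using eq unfolding F_def by simp
      have eqI: "I2 x = I2 y"
      proof (rule ccontr)
        assume ne: "I2 x \<noteq> I2 y"
        have "Q (I2 x) \<inter> Q (I2 y) = {}"
          using dQ[rule_format, OF conjunct1[OF Ix(2)] conjunct1[OF Iy(2)] ne] .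
        moreover have "x \<otimes> inv h (I2 x) \<in> Q (I2 x)" using Ix(2) by (rule conjunct2)
        moreover have "x \<otimes> inv h (I2 x) \<in> Q (I2 y)" unfolding e using Iy(2) by (rule conjunct2)
        ultimately show False by blast
      qed
      have gi: "h (I2 y) \<in> carrier G" using Qc[rule_format, OF conjunct1[OF Iy(2)]] by blast
      show ?thesis using e eqI x y gi \<open>\<not> b\<close> \<open>\<not> b'\<close> by simp
    qed
  qed
  moreover have "\<forall>x\<in>carrier G. \<exists>i<m. F True x = x \<otimes> inv g i" using I1 unfolding F_def by auto
  moreover have "\<forall>x\<in>carrier G. \<exists>j<n. F False x = x \<otimes> inv h j" using I2 unfolding F_def by auto
  ultimately show ?thesis unfolding mt_def using mn Pc Qc by blast
qed

lemma mt_imp_pd: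
  assumes "mt G m n"
  shows "paradoxical_decomposition G m n"
proof -
  obtain g h F where mn: "0 < m" "0 < n"
    and gc: "\<forall>i<m. g i \<in> carrier G" and hc: "\<forall>j<n. h j \<in> carrier G"
    and F1: "\<forall>x\<in>carrier G. \<exists>i<m. F True x = x \<otimes> inv g i"
    and F2: "\<forall>x\<in>carrier G. \<exists>j<n. F False x = x \<otimes> inv h j"
    and inj: "inj_on (\<lambda>(b,x). F b x) (UNIV \<times> carrier G)"
    using assms unfolding mt_def by (elim conjE exE) (rule that; assumption)
  have injF: "b = b' \<and> x = y" if "x \<in> carrier G" "y \<in> carrier G" "F b x = F b' y" for b b' x y
    using inj_onD[OF inj, of "(b,x)" "(b',y)"] that by simp
  define P where "P i = {x \<otimes> inv g i | x. x \<in> carrier G \<and> F True x = x \<otimes> inv g i \<and>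
      (\<forall>i'<i. F True x \<noteq> x \<otimes> inv g i')}" for i
  define Q where "Q j = {x \<otimes> inv h j | x. x \<in> carrier G \<and> F False x = x \<otimes> inv h j \<and>
      (\<forall>j'<j. F False x \<noteq> x \<otimes> inv h j')}" for j
  have Pc: "\<forall>i<m. P i \<subseteq> carrier G \<and> g i \<in> carrier G" using gc unfolding P_def by auto
  have Qc: "\<forall>j<n. Q j \<subseteq> carrier G \<and> h j \<in> carrier G" using hc unfolding Q_def by auto
  have dP: "\<forall>i<m. \<forall>i'<m. i \<noteq> i' \<longrightarrow> P i \<inter> P i' = {}"
  proof (intro allI impI)
    fix i i' assume "i < m" "i' < m" "i \<noteq> i'"
    show "P i \<inter> P i' = {}"
    proof (rule ccontr)
      assume "P i \<inter> P i' \<noteq> {}"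
      then obtain x y where x: "x \<in> carrier G" "F True x = x \<otimes> inv g i" "\<forall>k<i. F True x \<noteq> x \<otimes> inv g k"
        and y: "y \<in> carrier G" "F True y = y \<otimes> inv g i'" "\<forall>k<i'. F True y \<noteq> y \<otimes> inv g k"
        and e: "x \<otimes> inv g i = y \<otimes> inv g i'" unfolding P_def by blast
      have "F True x = F True y" using x(2) y(2) e by simp
      then have "x = y" using injF[OF x(1) y(1)] by blast
      then show False using x y \<open>i \<noteq> i'\<close> by (metis linorder_neqE_nat)
    qed
  qed
  have dQ: "\<forall>j<n. \<forall>j'<n. j \<noteq> j' \<longrightarrow> Q j \<inter> Q j' = {}"
  proof (intro allI impI)
    fix i i' assume "i < n" "i' < n" "i \<noteq> i'"
    show "Q i \<inter> Q i' = {}"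
    proof (rule ccontr)
      assume "Q i \<inter> Q i' \<noteq> {}"
      then obtain x y where x: "x \<in> carrier G" "F False x = x \<otimes> inv h i" "\<forall>k<i. F False x \<noteq> x \<otimes> inv h k"
        and y: "y \<in> carrier G" "F False y = y \<otimes> inv h i'" "\<forall>k<i'. F False y \<noteq> y \<otimes> inv h k"
        and e: "x \<otimes> inv h i = y \<otimes> inv h i'" unfolding Q_def by blast
      have "F False x = F False y" using x(2) y(2) e by simp
      then have "x = y" using injF[OF x(1) y(1)] by blast
      then show False using x y \<open>i \<noteq> i'\<close> by (metis linorder_neqE_nat)
    qed
  qed
  have dPQ: "\<forall>i<m. \<forall>j<n. P i \<inter> Q j = {}"
  proof (intro allI impI)
    fix i j assume "i < m" "j < n"
    show "P i \<inter> Q j = {}"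
    proof (rule ccontr)
      assume "P i \<inter> Q j \<noteq> {}"
      then obtain x y where x: "x \<in> carrier G" "F True x = x \<otimes> inv g i"
        and y: "y \<in> carrier G" "F False y = y \<otimes> inv h j"
        and e: "x \<otimes> inv g i = y \<otimes> inv h j" unfolding P_def Q_def by blast
      have "F True x = F False y" using x(2) y(2) e by simp
      then show False using injF[OF x(1) y(1)] by blast
    qed
  qed
  have cP: "carrier G = (\<Union>i<m. P i #> g i)"
  proof
    show "(\<Union>i<m. P i #> g i) \<subseteq> carrier G" using Pc r_coset_subset_G by blast
  next
    show "carrier G \<subseteq> (\<Union>i<m. P i #> g i)"
    proof
      fix x assume x: "x \<in> carrier G"
      define i where "i = (LEAST i. i < m \<and> F True x = x \<otimes> inv g i)"
      have ex: "\<exists>i. i < m \<and> F True x = x \<otimes> inv g i" using F1 x by blast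
      have i: "i < m" "F True x = x \<otimes> inv g i" using LeastI_ex[OF ex] unfolding i_def by auto
      have min: "\<forall>k<i. F True x \<noteq> x \<otimes> inv g k"
        using not_less_Least[where P="\<lambda>i. i < m \<and> F True x = x \<otimes> inv g i"] i(1) unfolding i_def
        by (meson order.strict_trans)
      have "x \<otimes> inv g i \<in> P i" unfolding P_def using x i min by blast
      moreover have "x = (x \<otimes> inv g i) \<otimes> g i" using x gc i by (simp add: m_assoc)
      ultimately have "x \<in> P i #> g i" unfolding r_coset_def by blast
      then show "x \<in> (\<Union>i<m. P i #> g i)" using i by blast
    qed
  qed
  have cQ: "carrier G = (\<Union>j<n. Q j #> h j)"
  proof
    show "(\<Union>j<n. Q j #> h j) \<subseteq> carrier G" using Qc r_coset_subset_G by blast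
  next
    show "carrier G \<subseteq> (\<Union>j<n. Q j #> h j)"
    proof
      fix x assume x: "x \<in> carrier G"
      define i where "i = (LEAST i. i < n \<and> F False x = x \<otimes> inv h i)"
      have ex: "\<exists>i. i < n \<and> F False x = x \<otimes> inv h i" using F2 x by blast
      have i: "i < n" "F False x = x \<otimes> inv h i" using LeastI_ex[OF ex] unfolding i_def by auto
      have min: "\<forall>k<i. F False x \<noteq> x \<otimes> inv h k"
        using not_less_Least[where P="\<lambda>i. i < n \<and> F False x = x \<otimes> inv h i"] i(1) unfolding i_def
        by (meson order.strict_trans)
      have "x \<otimes> inv h i \<in> Q i" unfolding Q_def using x i min by blast
      moreover have "x = (x \<otimes> inv h i) \<otimes> h i" using x hc i by (simp add: m_assoc)
      ultimately have "x \<in> Q i #> h i" unfolding r_coset_def by blast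
      then show "x \<in> (\<Union>j<n. Q j #> h j)" using i by blast
    qed
  qed
  show ?thesis unfolding paradoxical_decomposition_def
    using mn Pc Qc dP dQ dPQ cP cQ by blast
qed

lemma pd_iff_mt: "paradoxical_decomposition G m n \<longleftrightarrow> mt G m n"
  using pd_imp_mt mt_imp_pd by blast

end



context normal begin

lemma gh: "group_hom G (G Mod H) (\<lambda>a. H #> a)"
  by (simp add: group_hom_def group_hom_axioms_def factorgroup_is_group r_coset_hom_Mod is_group)

lemma carrier_Mod: "carrier (G Mod H) = rcosets H"
  by (simp add: FactGroup_def)

lemma Mod_mult_inv:
  assumes C: "C \<in> rcosets H" and t: "t \<in> carrier G"
  shows "C \<otimes>\<^bsub>G Mod H\<^esub> inv\<^bsub>G Mod H\<^esub> (H #> t) = C #> inv t"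
proof -
  obtain c where c: "c \<in> carrier G" "C = H #> c" using C unfolding RCOSETS_def by auto
  have "inv\<^bsub>G Mod H\<^esub> (H #> t) = H #> inv t" using group_hom.hom_inv[OF gh t] by simp
  then have "C \<otimes>\<^bsub>G Mod H\<^esub> inv\<^bsub>G Mod H\<^esub> (H #> t) = (H #> c) <#> (H #> inv t)"
    using c by simp
  also have "\<dots> = H #> (c \<otimes> inv t)" using rcos_sum c t by simp
  also have "\<dots> = C #> inv t" using c t coset_mult_assoc subset by simp
  finally show ?thesis .
qed

lemma coset_eq_of_mem:
  assumes "C \<in> rcosets H" "D \<in> rcosets H" "x \<in> C" "x \<in> D"
  shows "C = D"
  using rcos_disjoint[OF subgroup_axioms] assms unfolding pairwise_def disjnt_def by blast

lemma mt_Mod_imp: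
  assumes "mt (G Mod H) m n"
  shows "mt G m n"
proof -
  obtain g' h' F' where mn: "0 < m" "0 < n"
    and gc: "\<forall>i<m. g' i \<in> carrier (G Mod H)" and hc: "\<forall>j<n. h' j \<in> carrier (G Mod H)"
    and F1: "\<forall>x\<in>carrier (G Mod H). \<exists>i<m. F' True x = x \<otimes>\<^bsub>G Mod H\<^esub> inv\<^bsub>G Mod H\<^esub> g' i"
    and F2: "\<forall>x\<in>carrier (G Mod H). \<exists>j<n. F' False x = x \<otimes>\<^bsub>G Mod H\<^esub> inv\<^bsub>G Mod H\<^esub> h' j"
    and inj: "inj_on (\<lambda>(b,x). F' b x) (UNIV \<times> carrier (G Mod H))"
    using assms unfolding mt_def by (elim conjE exE) (rule that; assumption)
  define g where "g i = (SOME x. x \<in> carrier G \<and> g' i = H #> x)" for i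
  define h where "h j = (SOME x. x \<in> carrier G \<and> h' j = H #> x)" for j
  have g: "g i \<in> carrier G \<and> g' i = H #> g i" if "i < m" for i
  proof -
    have "\<exists>x. x \<in> carrier G \<and> g' i = H #> x" using gc that unfolding carrier_FactGroup by auto
    then show ?thesis unfolding g_def by (rule someI_ex)
  qed
  have h: "h j \<in> carrier G \<and> h' j = H #> h j" if "j < n" for j
  proof -
    have "\<exists>x. x \<in> carrier G \<and> h' j = H #> x" using hc that unfolding carrier_FactGroup by auto
    then show ?thesis unfolding h_def by (rule someI_ex)
  qed
  have F1': "\<forall>C\<in>rcosets H. \<exists>i<m. F' True C = C #> inv (g i)"
  proof
    fix C assume C: "C \<in> rcosets H"
    then obtain i where i: "i < m" "F' True C = C \<otimes>\<^bsub>G Mod H\<^esub> inv\<^bsub>G Mod H\<^esub> g' i"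
      using F1 carrier_Mod by auto
    then show "\<exists>i<m. F' True C = C #> inv (g i)" using g[OF i(1)] Mod_mult_inv[OF C] by auto
  qed
  have F2': "\<forall>C\<in>rcosets H. \<exists>j<n. F' False C = C #> inv (h j)"
  proof
    fix C assume C: "C \<in> rcosets H"
    then obtain i where i: "i < n" "F' False C = C \<otimes>\<^bsub>G Mod H\<^esub> inv\<^bsub>G Mod H\<^esub> h' i"
      using F2 carrier_Mod by auto
    then show "\<exists>j<n. F' False C = C #> inv (h j)" using h[OF i(1)] Mod_mult_inv[OF C] by auto
  qed
  define I1 where "I1 C = (SOME i. i < m \<and> F' True C = C #> inv (g i))" for C
  define I2 where "I2 C = (SOME j. j < n \<and> F' False C = C #> inv (h j))" for C
  have I1: "I1 C < m \<and> F' True C = C #> inv (g (I1 C))" if Cr: "C \<in> rcosets H" for C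
    unfolding I1_def by (rule someI_ex[OF F1'[rule_format, OF Cr]])
  have I2: "I2 C < n \<and> F' False C = C #> inv (h (I2 C))" if Cr: "C \<in> rcosets H" for C
    unfolding I2_def by (rule someI_ex[OF F2'[rule_format, OF Cr]])
  define F where "F b x = (if b then x \<otimes> inv g (I1 (H #> x)) else x \<otimes> inv h (I2 (H #> x)))" for b x
  have Fc: "F b x \<in> carrier G" if x: "x \<in> carrier G" for b x
    using g h I1 I2 x rcosetsI[OF subset x] unfolding F_def by auto
  have HF: "H #> F b x = F' b (H #> x)" if x: "x \<in> carrier G" for b x
  proof (cases b)
    case True
    have Cx: "H #> x \<in> rcosets H" using rcosetsI[OF subset x] .
    have gi: "g (I1 (H #> x)) \<in> carrier G" using g I1[OF Cx] by blast
    have "H #> F b x = (H #> x) #> inv g (I1 (H #> x))"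
      unfolding F_def using True coset_mult_assoc[OF subset x] gi by simp
    also have "\<dots> = F' b (H #> x)" using I1[OF Cx] True by simp
    finally show ?thesis .
  next
    case False
    have Cx: "H #> x \<in> rcosets H" using rcosetsI[OF subset x] .
    have gi: "h (I2 (H #> x)) \<in> carrier G" using h I2[OF Cx] by blast
    have "H #> F b x = (H #> x) #> inv h (I2 (H #> x))"
      unfolding F_def using False coset_mult_assoc[OF subset x] gi by simp
    also have "\<dots> = F' b (H #> x)" using I2[OF Cx] False by simp
    finally show ?thesis .
  qed
  have "inj_on (\<lambda>(b,x). F b x) (UNIV \<times> carrier G)"
  proof (rule inj_onI, clarify)
    fix b x b' y assume x: "x \<in> carrier G" and y: "y \<in> carrier G" and eq: "F b x = F b' y"
    have Cx: "H #> x \<in> carrier (G Mod H)" using rcosetsI[OF subset x] carrier_Mod by simp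
    have Cy: "H #> y \<in> carrier (G Mod H)" using rcosetsI[OF subset y] carrier_Mod by simp
    have "F' b (H #> x) = F' b' (H #> y)" using HF[OF x, of b] HF[OF y, of b'] eq by simp
    then have bb: "b = b'" and xy: "H #> x = H #> y"
      using inj_onD[OF inj, of "(b, H #> x)" "(b', H #> y)"] Cx Cy by auto
    have "x = y"
    proof (cases b)
      case True
      have gi: "g (I1 (H #> y)) \<in> carrier G" using g I1 rcosetsI[OF subset y] by blast
      show ?thesis using eq bb xy True x y gi unfolding F_def by simp
    next
      case False
      have gi: "h (I2 (H #> y)) \<in> carrier G" using h I2 rcosetsI[OF subset y] by blast
      show ?thesis using eq bb xy False x y gi unfolding F_def by simp
    qed
    then show "b = b' \<and> x = y" using bb by simp
  qed
  moreover have "\<forall>x\<in>carrier G. \<exists>i<m. F True x = x \<otimes> inv g i"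
    using I1 rcosetsI[OF subset] unfolding F_def by auto
  moreover have "\<forall>x\<in>carrier G. \<exists>j<n. F False x = x \<otimes> inv h j"
    using I2 rcosetsI[OF subset] unfolding F_def by auto
  moreover have "\<forall>i<m. g i \<in> carrier G" using g by blast
  moreover have "\<forall>j<n. h j \<in> carrier G" using h by blast
  ultimately show ?thesis unfolding mt_def using mn by blast
qed

end

context amen_normal begin

lemma mt_imp_Mod:
  assumes "mt G m n"
  shows "mt (G Mod H) m n"
proof -
  obtain g h F where mn: "0 < m" "0 < n"
    and gc: "\<forall>i<m. g i \<in> carrier G" and hc: "\<forall>j<n. h j \<in> carrier G"
    and F1: "\<forall>x\<in>carrier G. \<exists>i<m. F True x = x \<otimes> inv g i"
    and F2: "\<forall>x\<in>carrier G. \<exists>j<n. F False x = x \<otimes> inv h j"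
    and inj: "inj_on (\<lambda>(b,x). F b x) (UNIV \<times> carrier G)"
    using assms unfolding mt_def by (elim conjE exE) (rule that; assumption)
  define T :: "bool \<times> 'a set \<Rightarrow> 'a set" where
    "T a = (if fst a then (\<lambda>i. inv g i) ` {..<m} else (\<lambda>j. inv h j) ` {..<n})" for a
  define N where "N a = (\<lambda>t. snd a #> t) ` T a" for a
  define L where "L = (UNIV :: bool set) \<times> rcosets H"
  have Tfin: "finite (T a) \<and> T a \<subseteq> carrier G" for a
    unfolding T_def using gc hc by auto
  have hallc: "\<forall>A\<subseteq>L. finite A \<longrightarrow> card A \<le> card (\<Union>(N ` A))"
  proof (intro allI impI)
    fix A assume AL: "A \<subseteq> L" and finA: "finite A"
    have Cs: "\<forall>a\<in>A. snd a \<in> rcosets H" using AL unfolding L_def by auto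
    have fT: "\<forall>a\<in>A. \<forall>x\<in>snd a. \<exists>t\<in>T a. F (fst a) x = x \<otimes> t"
    proof (intro ballI)
      fix a x assume a: "a \<in> A" and x: "x \<in> snd a"
      have xc: "x \<in> carrier G" using x Cs a coset_carrier by blast
      show "\<exists>t\<in>T a. F (fst a) x = x \<otimes> t"
      proof (cases "fst a")
        case True
        then obtain i where "i < m" "F True x = x \<otimes> inv g i" using F1 xc by blast
        then show ?thesis using True unfolding T_def by auto
      next
        case False
        then obtain i where "i < n" "F False x = x \<otimes> inv h i" using F2 xc by blast
        then show ?thesis using False unfolding T_def by auto
      qed
    qed
    have injS: "inj_on (\<lambda>(a,x). F (fst a) x) (Sigma A snd)"
    proof (rule inj_onI)
      fix p q assume p: "p \<in> Sigma A snd" and q: "q \<in> Sigma A snd"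
        and eq0: "(\<lambda>(a,x). F (fst a) x) p = (\<lambda>(a,x). F (fst a) x) q"
      obtain b C x where pp: "p = ((b, C), x)" by (metis prod.collapse)
      obtain b' C' y where qq: "q = ((b', C'), y)" by (metis prod.collapse)
      have 1: "(b, C) \<in> A" "x \<in> C" "(b', C') \<in> A" "y \<in> C'" using p q pp qq by auto
      have eq: "F b x = F b' y" using eq0 pp qq by simp
      have C: "C \<in> rcosets H" "C' \<in> rcosets H" using Cs 1 by auto
      have xc: "x \<in> carrier G" "y \<in> carrier G" using 1 C coset_carrier by auto
      have bx: "b = b' \<and> x = y" using inj_onD[OF inj, of "(b,x)" "(b',y)"] eq xc by simp
      then have "C = C'" using coset_eq_of_mem[OF C] 1 by simp
      then show "p = q" using bx pp qq by simp
    qed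
    have "card A \<le> card (\<Union>a\<in>A. (\<lambda>t. snd a #> t) ` T a)"
      by (rule hall_count[OF finA Cs _ fT injS]) (use Tfin in blast)
    then show "card A \<le> card (\<Union>(N ` A))" unfolding N_def by simp
  qed
  have Nfin: "\<forall>a\<in>L. finite (N a)" unfolding N_def using Tfin by auto
  obtain f0 where f0: "\<forall>a\<in>L. f0 a \<in> N a" "inj_on f0 L"
    using hall_inf[OF Nfin hallc] by blast
  define F' where "F' b C = f0 (b, C)" for b C
  define g' where "g' i = H #> g i" for i
  define h' where "h' j = H #> h j" for j
  have g'c: "\<forall>i<m. g' i \<in> carrier (G Mod H)" using gc rcosetsI[OF subset] carrier_Mod unfolding g'_def by auto
  have h'c: "\<forall>j<n. h' j \<in> carrier (G Mod H)" using hc rcosetsI[OF subset] carrier_Mod unfolding h'_def by auto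
  have F1': "\<forall>C\<in>carrier (G Mod H). \<exists>i<m. F' True C = C \<otimes>\<^bsub>G Mod H\<^esub> inv\<^bsub>G Mod H\<^esub> g' i"
  proof
    fix C assume "C \<in> carrier (G Mod H)"
    then have C: "C \<in> rcosets H" using carrier_Mod by simp
    then have "(True, C) \<in> L" unfolding L_def by simp
    then have "f0 (True, C) \<in> N (True, C)" using f0 by blast
    then obtain i where i: "i < m" "f0 (True, C) = C #> inv g i" unfolding N_def T_def by auto
    then show "\<exists>i<m. F' True C = C \<otimes>\<^bsub>G Mod H\<^esub> inv\<^bsub>G Mod H\<^esub> g' i"
      using Mod_mult_inv[OF C] gc unfolding F'_def g'_def by auto
  qed
  have F2': "\<forall>C\<in>carrier (G Mod H). \<exists>j<n. F' False C = C \<otimes>\<^bsub>G Mod H\<^esub> inv\<^bsub>G Mod H\<^esub> h' j"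
  proof
    fix C assume "C \<in> carrier (G Mod H)"
    then have C: "C \<in> rcosets H" using carrier_Mod by simp
    then have "(False, C) \<in> L" unfolding L_def by simp
    then have "f0 (False, C) \<in> N (False, C)" using f0 by blast
    then obtain i where i: "i < n" "f0 (False, C) = C #> inv h i" unfolding N_def T_def by auto
    then show "\<exists>j<n. F' False C = C \<otimes>\<^bsub>G Mod H\<^esub> inv\<^bsub>G Mod H\<^esub> h' j"
      using Mod_mult_inv[OF C] hc unfolding F'_def h'_def by auto
  qed
  have "inj_on (\<lambda>(b,C). F' b C) (UNIV \<times> carrier (G Mod H))"
    using f0(2) unfolding F'_def L_def carrier_Mod by (simp add: case_prod_eta)
  then show ?thesis unfolding mt_def using mn g'c h'c F1' F2' by blast
qed

end

lemma tarski_eq: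
  assumes "\<And>m n. paradoxical_decomposition K m n \<longleftrightarrow> paradoxical_decomposition K' m n"
  shows "tarski_number K = tarski_number K'"
  unfolding tarski_number_def using assms by simp

theorem theorem1:
  fixes G :: "('a, 'b) monoid_scheme" and H :: "'a set"
  assumes "group G"
    and "\<not> amenable G"
    and "H \<lhd> G"
    and "amenable (G\<lparr>carrier := H\<rparr>)"
  shows "tarski_number (G Mod H) = tarski_number G"
proof -
  interpret normal H G by (rule assms(3))
  obtain \<mu> :: "'a set \<Rightarrow> real" where
    mu1: "\<forall>A. A \<subseteq> H \<longrightarrow> 0 \<le> \<mu> A" and mu2: "\<mu> H = 1"
    and mu3: "\<forall>A B. A \<subseteq> H \<longrightarrow> B \<subseteq> H \<longrightarrow> A \<inter> B = {} \<longrightarrow> \<mu> (A \<union> B) = \<mu> A + \<mu> B"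
    and mu4: "\<forall>g\<in>H. \<forall>A. A \<subseteq> H \<longrightarrow> \<mu> (A #>\<^bsub>G\<^esub> g) = \<mu> A"
    using assms(4) unfolding amenable_def by auto
  interpret amen_normal H G \<mu>
    by (unfold_locales) (use mu1 mu2 mu3 mu4 in auto)
  have Q: "group (G Mod H)" by (rule factorgroup_is_group)
  show ?thesis
  proof (rule tarski_eq)
    fix m n
    show "paradoxical_decomposition (G Mod H) m n \<longleftrightarrow> paradoxical_decomposition G m n"
      using group.pd_iff_mt[OF Q] pd_iff_mt mt_imp_Mod mt_Mod_imp by blast
  qed
qed


end
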